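(* The equations \[ \alpha u=k\frac{f_0g_0f_3}{f_0g_0+g_0f_3+f_3g_3}+\ell\frac{f_2g_2f_5}{f_2g_2+g_2f_5+f_5g_5}+m\frac{f_4g_4f_1}{f_4g_4+g_4f_1+f_1g_1}, \] \[ \beta v=k\frac{g_0f_3g_3}{f_0g_0+g_0f_3+f_3g_3}+\ell\frac{g_2f_5g_5}{f_2g_2+g_2f_5+f_5g_5}+m\frac{g_4f_1g_1}{f_4g_4+g_4f_1+f_1g_1} \] are well defined equations for the point $\mathfrak{z}\in V(\mathcal{T}\mathcal{L})$, i.e. they are invariant under the shift $(k,\ell,m)\mapsto(k+n,\ell+n,m+n)$, provided the equations $\frac{u(\mathfrak{z}_2)-u(\mathfrak{z}_1)}{u(\mathfrak{z}_3)-u(\mathfrak{z}_2)}=\frac{v(\mathfrak{z}_3)-v(\mathfrak{z}_2)}{v(\mathfrak{z}_1)-v(\mathfrak{z}_3)}$ hold on all positively oriented elementary triangles.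
   Context: On the regular triangular lattice with vertices $\mathfrak{z}=k+\ell\omega+m\omega^2$ ($\omega=e^{2\pi i/3}$; the triples $(k,\ell,m)$ and $(k+n,\ell+n,m+n)$ represent the same vertex), $u,v$ are complex functions on vertices. For a vertex $\mathfrak{z}$ with chosen representative $(k,\ell,m)$, $u=u(\mathfrak{z})$, $v=v(\mathfrak{z})$, and with edges $\mathfrak{e}_0=(\mathfrak{z},\mathfrak{z}+1)$, $\mathfrak{e}_2=(\mathfrak{z},\mathfrak{z}+\omega)$, $\mathfrak{e}_4=(\mathfrak{z},\mathfrak{z}+\omega^2)$, $\mathfrak{e}_1=(\mathfrak{z}-\omega^2,\mathfrak{z})$, $\mathfrak{e}_3=(\mathfrak{z}-1,\mathfrak{z})$, $\mathfrak{e}_5=(\mathfrak{z}-\omega,\mathfrak{z})$, set $f_j=u(\text{end of }\mathfrak{e}_j)-u(\text{start of }\mathfrak{e}_j)$, $g_j$ likewise with $v$. A positively oriented elementary triangle has consecutive vertices $\mathfrak{z}_1,\mathfrak{z}_2,\mathfrak{z}_3$ with $\mathfrak{z}_2-\mathfrak{z}_1,\mathfrak{z}_3-\mathfrak{z}_2,\mathfrak{z}_1-\mathfrak{z}_3\in\{1,\omega,\omega^2\}$. $\alpha,\beta\in\mathbb C$ are constants. *)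

theory Defs
  imports Complex_Main
begin

definition omega :: complex where
  "omega = cis (2 * pi / 3)"

definition vtx :: "int \<Rightarrow> int \<Rightarrow> int \<Rightarrow> complex" where
  "vtx k l m = of_int k + of_int l * omega + of_int m * omega ^ 2"

definition lattice_vertices :: "complex set" where
  "lattice_vertices = {vtx k l m | k l m. True}"

definition unit_dirs :: "complex set" where
  "unit_dirs = {1, omega, omega ^ 2}"

definition pos_triangle :: "complex \<Rightarrow> complex \<Rightarrow> complex \<Rightarrow> bool" where
  "pos_triangle z1 z2 z3 \<longleftrightarrow> z1 \<in> lattice_vertices \<and>
     z2 - z1 \<in> unit_dirs \<and> z3 - z2 \<in> unit_dirs \<and> z1 - z3 \<in> unit_dirs"

text \<open>Edge differences f_j (for w = u) resp. g_j (for w = v) at the vertex z: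
  e0 = (z, z+1), e1 = (z - omega^2, z), e2 = (z, z+omega), e3 = (z-1, z),
  e4 = (z, z+omega^2), e5 = (z-omega, z); value at end minus value at start.\<close>
definition edge_diff :: "(complex \<Rightarrow> complex) \<Rightarrow> complex \<Rightarrow> nat \<Rightarrow> complex" where
  "edge_diff w z j =
     [w (z + 1) - w z, w z - w (z - omega ^ 2), w (z + omega) - w z,
      w z - w (z - 1), w (z + omega ^ 2) - w z, w z - w (z - omega)] ! j"

definition rhs_u :: "(complex \<Rightarrow> complex) \<Rightarrow> (complex \<Rightarrow> complex) \<Rightarrow> int \<Rightarrow> int \<Rightarrow> int \<Rightarrow> complex" where
  "rhs_u u v k l m =
     (let z = vtx k l m; f = edge_diff u z; g = edge_diff v z in
        of_int k * (f 0 * g 0 * f 3) / (f 0 * g 0 + g 0 * f 3 + f 3 * g 3)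
      + of_int l * (f 2 * g 2 * f 5) / (f 2 * g 2 + g 2 * f 5 + f 5 * g 5)
      + of_int m * (f 4 * g 4 * f 1) / (f 4 * g 4 + g 4 * f 1 + f 1 * g 1))"

definition rhs_v :: "(complex \<Rightarrow> complex) \<Rightarrow> (complex \<Rightarrow> complex) \<Rightarrow> int \<Rightarrow> int \<Rightarrow> int \<Rightarrow> complex" where
  "rhs_v u v k l m =
     (let z = vtx k l m; f = edge_diff u z; g = edge_diff v z in
        of_int k * (g 0 * f 3 * g 3) / (f 0 * g 0 + g 0 * f 3 + f 3 * g 3)
      + of_int l * (g 2 * f 5 * g 5) / (f 2 * g 2 + g 2 * f 5 + f 5 * g 5)
      + of_int m * (g 4 * f 1 * g 1) / (f 4 * g 4 + g 4 * f 1 + f 1 * g 1))"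

end

theory Submission imports Defs begin

lemma omega_sq: "omega ^ 2 = - 1 - omega"
proof -
  have o: "omega = Complex (-1/2) (sqrt 3 / 2)"
    unfolding omega_def by (simp add: cis.ctr cos_120 sin_120)
  show ?thesis unfolding o by (simp add: complex_eq_iff power2_eq_square algebra_simps)
qed

lemma frac3:
  fixes A B C p q r t s :: complex
  assumes "p \<noteq> 0" "q \<noteq> 0" "r \<noteq> 0" "t \<noteq> 0" "s \<noteq> 0"
  shows "A/(p*q) + B/(s*(r*t)) + C/(q*r) = (A*r*t*s + B*(p*q) + C*p*t*s)/(s*p*q*r*t)"
  using assms by (simp add: field_simps)

lemma frac3v:
  fixes A B C p q r t :: complex
  assumes "p \<noteq> 0" "q \<noteq> 0" "r \<noteq> 0" "t \<noteq> 0"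
  shows "A/(p*q) + B/(r*t) + C/(q*r) = (A*r*t + B*(p*q) + C*p*t)/(p*q*r*t)"
  using assms by (simp add: field_simps)

lemma lin3:
  fixes x y w n A B C D1 D2 D3 :: complex
  shows "(x+n)*A/D1 + (y+n)*B/D2 + (w+n)*C/D3 = x*A/D1 + y*B/D2 + w*C/D3 + n*(A/D1+B/D2+C/D3)"
  by (simp only: times_divide_eq_right[symmetric]) (simp add: algebra_simps add_divide_distrib)

lemma core:
  fixes a0 a1 a2 a3 a4 a5 b0 b1 b2 b3 b4 b5 :: complex
  assumes E0: "a0*b0 + a1*b1 = a1*b0" and E1: "a2*b2 + a1*b1 = a1*b2"
    and E2: "a2*b2 + a3*b3 = a3*b2" and E3: "a4*b4 + a3*b3 = a3*b4"
    and E4: "a4*b4 + a5*b5 = a5*b4" and E5: "a0*b0 + a5*b5 = a5*b0"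
    and nz: "a1 \<noteq> 0" "a3 \<noteq> 0" "a5 \<noteq> 0" "b0 \<noteq> 0" "b2 \<noteq> 0" "b4 \<noteq> 0"
    and Dk: "a0*b0 + a3*b3 - a3*b0 \<noteq> 0"
    and Dl: "a2*b2 + a5*b5 - a5*b2 \<noteq> 0"
    and Dm: "a4*b4 + a1*b1 - a1*b4 \<noteq> 0"
  shows "(-(a0*b0*a3)) / (a0*b0 + a3*b3 - a3*b0) + (-(a2*b2*a5)) / (a2*b2 + a5*b5 - a5*b2)
          + (-(a4*b4*a1)) / (a4*b4 + a1*b1 - a1*b4) = 0"
    and "(b0*(a3*b3)) / (a0*b0 + a3*b3 - a3*b0) + (b2*(a5*b5)) / (a2*b2 + a5*b5 - a5*b2)
          + (b4*(a1*b1)) / (a4*b4 + a1*b1 - a1*b4) = 0"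
proof -
  define c0 where "c0 = a0*b0"
  define c1 where "c1 = a1*b1"
  define c2 where "c2 = a2*b2"
  define c3 where "c3 = a3*b3"
  define c4 where "c4 = a4*b4"
  define c5 where "c5 = a5*b5"
  define s0 where "s0 = c0 + c1"
  define s1 where "s1 = c1 + c2"
  define s2 where "s2 = c2 + c3"
  define s3 where "s3 = c3 + c4"
  define s4 where "s4 = c4 + c5"
  define s5 where "s5 = c5 + c0"
  have S0: "s0 = a1*b0" using E0 by (simp add: s0_def c0_def c1_def)
  have S1: "s1 = a1*b2" using E1 by (simp add: s1_def c1_def c2_def add.commute)
  have S2: "s2 = a3*b2" using E2 by (simp add: s2_def c2_def c3_def)
  have S3: "s3 = a3*b4" using E3 by (simp add: s3_def c3_def c4_def add.commute)
  have S4: "s4 = a5*b4" using E4 by (simp add: s4_def c4_def c5_def)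
  have S5: "s5 = a5*b0" using E5 by (simp add: s5_def c5_def c0_def add.commute)
  have nzs: "s0 \<noteq> 0" "s1 \<noteq> 0" "s2 \<noteq> 0" "s3 \<noteq> 0" "s4 \<noteq> 0" "s5 \<noteq> 0"
    using nz by (simp_all add: S0 S1 S2 S3 S4 S5)
  have Q: "s0*s2*s4 - s1*s3*s5 = 0" by (simp add: S0 S1 S2 S3 S4 S5)
  define Xk where "Xk = (c0-c2)*(c1-c3)"
  define Xl where "Xl = (c2-c4)*(c3-c5)"
  define Xm where "Xm = (c1-c3)*(c2-c4)"
  have Dk': "(a0*b0 + a3*b3 - a3*b0) * s1 = Xk"
  proof -
    have "a3*b0*s1 = s0*s2" by (simp add: S0 S1 S2)
    then show ?thesis unfolding Xk_def s0_def s1_def s2_def c0_def[symmetric] c3_def[symmetric]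
      by (simp add: algebra_simps)
  qed
  have Dl': "(a2*b2 + a5*b5 - a5*b2) * s3 = Xl"
  proof -
    have "a5*b2*s3 = s2*s4" by (simp add: S2 S3 S4)
    then show ?thesis unfolding Xl_def s2_def s3_def s4_def c2_def[symmetric] c5_def[symmetric]
      by (simp add: algebra_simps)
  qed
  have Dm': "(a4*b4 + a1*b1 - a1*b4) * s2 = Xm"
  proof -
    have "a1*b4*s2 = s1*s3" by (simp add: S1 S2 S3)
    then show ?thesis unfolding Xm_def s1_def s2_def s3_def c4_def[symmetric] c1_def[symmetric]
      by (simp add: algebra_simps)
  qed
  have nzX: "Xk \<noteq> 0" "Xl \<noteq> 0" "Xm \<noteq> 0"
    using Dk' Dl' Dm' Dk Dl Dm nzs by auto
  have A3: "a3*s1 = a1*s2" by (simp add: S1 S2)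
  have A5: "a5*s1*s3 = a1*s2*s4" by (simp add: S1 S2 S3 S4)
  have B0: "b0*s1 = b2*s0" by (simp add: S0 S1)
  have B4: "b4*s2 = b2*s3" by (simp add: S2 S3)
  have Tk: "(-(a0*b0*a3)) / (a0*b0 + a3*b3 - a3*b0) = - a1*s2*c0 / Xk"
  proof -
    have "(-(a0*b0*a3)) / (a0*b0 + a3*b3 - a3*b0) = (-(a0*b0*a3*s1)) / ((a0*b0 + a3*b3 - a3*b0)*s1)"
      using nzs by simp
    also have "\<dots> = - a1*s2*c0 / Xk" unfolding Dk' using A3
      by (simp add: c0_def algebra_simps)
    finally show ?thesis .
  qed
  have Tl: "(-(a2*b2*a5)) / (a2*b2 + a5*b5 - a5*b2) = - a1*s2*s4*c2 / (s1*Xl)"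
  proof -
    have "(-(a2*b2*a5)) / (a2*b2 + a5*b5 - a5*b2) = (-(a2*b2*a5*s1*s3)) / ((a2*b2 + a5*b5 - a5*b2)*s3*s1)"
      using nzs by simp
    also have "\<dots> = - a1*s2*s4*c2 / (s1*Xl)"
    proof -
      have e: "a2*b2*a5*s1*s3 = c2*(a1*s2*s4)" unfolding A5[symmetric] c2_def by (simp add: mult_ac)
      show ?thesis unfolding Dl' e by (simp add: mult_ac)
    qed
    finally show ?thesis .
  qed
  have Tm: "(-(a4*b4*a1)) / (a4*b4 + a1*b1 - a1*b4) = - a1*s2*c4 / Xm"
  proof -
    have "(-(a4*b4*a1)) / (a4*b4 + a1*b1 - a1*b4) = (-(a4*b4*a1*s2)) / ((a4*b4 + a1*b1 - a1*b4)*s2)"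
      using nzs by simp
    also have "\<dots> = - a1*s2*c4 / Xm" unfolding Dm'
      by (simp add: c4_def algebra_simps)
    finally show ?thesis .
  qed
  have Pu: "c0*(c2-c4)*(c3-c5)*s1 + c2*s4*(c0-c2)*(c1-c3) + c4*(c0-c2)*(c3-c5)*s1
       = - c2 * (s0*s2*s4 - s1*s3*s5)"
    unfolding s0_def s1_def s2_def s3_def s4_def s5_def by (simp add: algebra_simps)
  show "(-(a0*b0*a3)) / (a0*b0 + a3*b3 - a3*b0) + (-(a2*b2*a5)) / (a2*b2 + a5*b5 - a5*b2)
          + (-(a4*b4*a1)) / (a4*b4 + a1*b1 - a1*b4) = 0"
  proof -
    have f: "c0-c2 \<noteq> 0" "c1-c3 \<noteq> 0" "c2-c4 \<noteq> 0" "c3-c5 \<noteq> 0"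
      using nzX unfolding Xk_def Xl_def Xm_def by auto
    have br: "c0/Xk + s4*c2/(s1*Xl) + c4/Xm
      = (c0*(c2-c4)*(c3-c5)*s1 + (s4*c2)*((c0-c2)*(c1-c3)) + c4*(c0-c2)*(c3-c5)*s1)
        / (s1*(c0-c2)*(c1-c3)*(c2-c4)*(c3-c5))"
      unfolding Xk_def Xl_def Xm_def by (rule frac3[OF f nzs(2)])
    have num: "c0*(c2-c4)*(c3-c5)*s1 + (s4*c2)*((c0-c2)*(c1-c3)) + c4*(c0-c2)*(c3-c5)*s1 = 0"
    proof -
      have "c0*(c2-c4)*(c3-c5)*s1 + (s4*c2)*((c0-c2)*(c1-c3)) + c4*(c0-c2)*(c3-c5)*s1
         = - c2 * (s0*s2*s4 - s1*s3*s5)"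
        unfolding s0_def s1_def s2_def s3_def s4_def s5_def by (simp add: algebra_simps)
      then show ?thesis using Q by simp
    qed
    have "c0/Xk + s4*c2/(s1*Xl) + c4/Xm = 0" unfolding br num by simp
    then have "- a1*s2*(c0/Xk + s4*c2/(s1*Xl) + c4/Xm) = 0" by simp
    then show ?thesis unfolding Tk Tl Tm by (simp add: algebra_simps)
  qed
  have Vk: "(b0*(a3*b3)) / (a0*b0 + a3*b3 - a3*b0) = b2*s0*c3 / Xk"
  proof -
    have "(b0*(a3*b3)) / (a0*b0 + a3*b3 - a3*b0) = (b0*s1*(a3*b3)) / ((a0*b0 + a3*b3 - a3*b0)*s1)"
      using nzs by simp
    also have "\<dots> = b2*s0*c3 / Xk" unfolding Dk' B0 by (simp add: c3_def)
    finally show ?thesis .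
  qed
  have Vl: "(b2*(a5*b5)) / (a2*b2 + a5*b5 - a5*b2) = b2*s3*c5 / Xl"
  proof -
    have "(b2*(a5*b5)) / (a2*b2 + a5*b5 - a5*b2) = (b2*s3*(a5*b5)) / ((a2*b2 + a5*b5 - a5*b2)*s3)"
      using nzs by simp
    also have "\<dots> = b2*s3*c5 / Xl" unfolding Dl' by (simp add: c5_def)
    finally show ?thesis .
  qed
  have Vm: "(b4*(a1*b1)) / (a4*b4 + a1*b1 - a1*b4) = b2*s3*c1 / Xm"
  proof -
    have "(b4*(a1*b1)) / (a4*b4 + a1*b1 - a1*b4) = (b4*s2*(a1*b1)) / ((a4*b4 + a1*b1 - a1*b4)*s2)"
      using nzs by simp
    also have "\<dots> = b2*s3*c1 / Xm" unfolding Dm' B4 by (simp add: c1_def)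
    finally show ?thesis .
  qed
  have Pv: "s0*c3*(c2-c4)*(c3-c5) + c5*s3*(c0-c2)*(c1-c3) + s3*c1*(c0-c2)*(c3-c5)
       = - c3 * (s0*s2*s4 - s1*s3*s5)"
    unfolding s0_def s1_def s2_def s3_def s4_def s5_def by (simp add: algebra_simps)
  show "(b0*(a3*b3)) / (a0*b0 + a3*b3 - a3*b0) + (b2*(a5*b5)) / (a2*b2 + a5*b5 - a5*b2)
          + (b4*(a1*b1)) / (a4*b4 + a1*b1 - a1*b4) = 0"
  proof -
    have f: "c0-c2 \<noteq> 0" "c1-c3 \<noteq> 0" "c2-c4 \<noteq> 0" "c3-c5 \<noteq> 0"
      using nzX unfolding Xk_def Xl_def Xm_def by auto
    have br: "(s0*c3)/Xk + (s3*c5)/Xl + (s3*c1)/Xm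
      = ((s0*c3)*(c2-c4)*(c3-c5) + (s3*c5)*((c0-c2)*(c1-c3)) + (s3*c1)*(c0-c2)*(c3-c5))
        / ((c0-c2)*(c1-c3)*(c2-c4)*(c3-c5))"
      unfolding Xk_def Xl_def Xm_def by (rule frac3v[OF f])
    have num: "(s0*c3)*(c2-c4)*(c3-c5) + (s3*c5)*((c0-c2)*(c1-c3)) + (s3*c1)*(c0-c2)*(c3-c5) = 0"
    proof -
      have "(s0*c3)*(c2-c4)*(c3-c5) + (s3*c5)*((c0-c2)*(c1-c3)) + (s3*c1)*(c0-c2)*(c3-c5)
         = - c3 * (s0*s2*s4 - s1*s3*s5)"
        unfolding s0_def s1_def s2_def s3_def s4_def s5_def by (simp add: algebra_simps)
      then show ?thesis using Q by simp
    qed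
    have "s0*c3/Xk + s3*c5/Xl + s3*c1/Xm = 0" unfolding br num by simp
    then have "b2*(s0*c3/Xk + s3*c5/Xl + s3*c1/Xm) = 0" by simp
    then show ?thesis unfolding Vk Vl Vm by (simp add: algebra_simps)
  qed
qed

lemma tri_eq:
  fixes u v :: "complex \<Rightarrow> complex"
  assumes nondeg: "\<forall>z1 z2 z3. pos_triangle z1 z2 z3 \<longrightarrow>
      u z2 \<noteq> u z1 \<and> u z3 \<noteq> u z2 \<and> u z1 \<noteq> u z3 \<and>
      v z2 \<noteq> v z1 \<and> v z3 \<noteq> v z2 \<and> v z1 \<noteq> v z3"
    and tri: "\<forall>z1 z2 z3. pos_triangle z1 z2 z3 \<longrightarrow>
      (u z2 - u z1) / (u z3 - u z2) = (v z3 - v z2) / (v z1 - v z3)"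
    and pt: "pos_triangle z P Q"
  shows "(u P - u z)*(v P - v z) + (u Q - u z)*(v Q - v z) = (u Q - u z)*(v P - v z)"
    and "u P - u z \<noteq> 0" "u Q - u z \<noteq> 0" "v P - v z \<noteq> 0" "v Q - v z \<noteq> 0"
proof -
  have nd: "u P \<noteq> u z" "u Q \<noteq> u P" "u z \<noteq> u Q" "v P \<noteq> v z" "v Q \<noteq> v P" "v z \<noteq> v Q"
    using nondeg pt by blast+
  have t: "(u P - u z) / (u Q - u P) = (v Q - v P) / (v z - v Q)" using tri pt by blast
  have "(u P - u z) * (v z - v Q) = (v Q - v P) * (u Q - u P)"
    using t nd by (simp add: divide_eq_eq eq_divide_eq)
  then show "(u P - u z)*(v P - v z) + (u Q - u z)*(v Q - v z) = (u Q - u z)*(v P - v z)"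
    by (simp add: algebra_simps)
  show "u P - u z \<noteq> 0" "u Q - u z \<noteq> 0" "v P - v z \<noteq> 0" "v Q - v z \<noteq> 0"
    using nd by auto
qed

theorem proposition15:
  fixes u v :: "complex \<Rightarrow> complex" and \<alpha> \<beta> :: complex and k l m n :: int
  assumes nondeg: "\<forall>z1 z2 z3. pos_triangle z1 z2 z3 \<longrightarrow>
      u z2 \<noteq> u z1 \<and> u z3 \<noteq> u z2 \<and> u z1 \<noteq> u z3 \<and>
      v z2 \<noteq> v z1 \<and> v z3 \<noteq> v z2 \<and> v z1 \<noteq> v z3"
    and tri: "\<forall>z1 z2 z3. pos_triangle z1 z2 z3 \<longrightarrow>
      (u z2 - u z1) / (u z3 - u z2) = (v z3 - v z2) / (v z1 - v z3)"
    and den: "let z = vtx k l m; f = edge_diff u z; g = edge_diff v z in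
      f 0 * g 0 + g 0 * f 3 + f 3 * g 3 \<noteq> 0 \<and>
      f 2 * g 2 + g 2 * f 5 + f 5 * g 5 \<noteq> 0 \<and>
      f 4 * g 4 + g 4 * f 1 + f 1 * g 1 \<noteq> 0"
  shows "vtx (k + n) (l + n) (m + n) = vtx k l m \<and>
    (\<alpha> * u (vtx k l m) = rhs_u u v k l m \<longleftrightarrow>
       \<alpha> * u (vtx (k + n) (l + n) (m + n)) = rhs_u u v (k + n) (l + n) (m + n)) \<and>
    (\<beta> * v (vtx k l m) = rhs_v u v k l m \<longleftrightarrow>
       \<beta> * v (vtx (k + n) (l + n) (m + n)) = rhs_v u v (k + n) (l + n) (m + n)) \<and>
    rhs_u u v (k + n) (l + n) (m + n) = rhs_u u v k l m \<and>
    rhs_v u v (k + n) (l + n) (m + n) = rhs_v u v k l m"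
proof -
  have shift: "vtx (k + n) (l + n) (m + n) = vtx k l m"
    unfolding vtx_def omega_sq by (simp add: algebra_simps)
  define z where "z = vtx k l m"
  have zL: "z \<in> lattice_vertices" unfolding z_def lattice_vertices_def by blast
  have ud: "1 \<in> unit_dirs" "omega \<in> unit_dirs" "omega^2 \<in> unit_dirs"
    unfolding unit_dirs_def by auto
  have w2: "- 1 - omega = omega^2" using omega_sq by simp
  have w1: "- 1 - omega^2 = omega" using omega_sq by simp
  have w0: "- omega - omega^2 = 1" using omega_sq by simp
  define N0 where "N0 = z + 1"
  define N1 where "N1 = z - omega^2"
  define N2 where "N2 = z + omega"
  define N3 where "N3 = z - 1"
  define N4 where "N4 = z + omega^2"
  define N5 where "N5 = z - omega"
  have T0: "pos_triangle z N0 N1" unfolding pos_triangle_def N0_def N1_def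
    using zL ud w1 by (simp add: algebra_simps)
  have T1: "pos_triangle z N2 N1" unfolding pos_triangle_def N2_def N1_def
    using zL ud w0 by (simp add: algebra_simps)
  have T2: "pos_triangle z N2 N3" unfolding pos_triangle_def N2_def N3_def
    using zL ud w2 by (simp add: algebra_simps)
  have T3: "pos_triangle z N4 N3" unfolding pos_triangle_def N4_def N3_def
    using zL ud w1 by (simp add: algebra_simps)
  have T4: "pos_triangle z N4 N5" unfolding pos_triangle_def N4_def N5_def
    using zL ud w0 by (simp add: algebra_simps)
  have T5: "pos_triangle z N0 N5" unfolding pos_triangle_def N0_def N5_def
    using zL ud w2 by (simp add: algebra_simps)
  note R0 = tri_eq[OF nondeg tri T0]
  note R1 = tri_eq[OF nondeg tri T1]
  note R2 = tri_eq[OF nondeg tri T2]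
  note R3 = tri_eq[OF nondeg tri T3]
  note R4 = tri_eq[OF nondeg tri T4]
  note R5 = tri_eq[OF nondeg tri T5]
  define a0 where "a0 = u N0 - u z"
  define a1 where "a1 = u N1 - u z"
  define a2 where "a2 = u N2 - u z"
  define a3 where "a3 = u N3 - u z"
  define a4 where "a4 = u N4 - u z"
  define a5 where "a5 = u N5 - u z"
  define b0 where "b0 = v N0 - v z"
  define b1 where "b1 = v N1 - v z"
  define b2 where "b2 = v N2 - v z"
  define b3 where "b3 = v N3 - v z"
  define b4 where "b4 = v N4 - v z"
  define b5 where "b5 = v N5 - v z"
  have fu: "edge_diff u z 0 = a0" "edge_diff u z 1 = - a1" "edge_diff u z 2 = a2"
    "edge_diff u z 3 = - a3" "edge_diff u z 4 = a4" "edge_diff u z 5 = - a5"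
    unfolding edge_diff_def a0_def a1_def a2_def a3_def a4_def a5_def
      N0_def N1_def N2_def N3_def N4_def N5_def by simp_all
  have gv: "edge_diff v z 0 = b0" "edge_diff v z 1 = - b1" "edge_diff v z 2 = b2"
    "edge_diff v z 3 = - b3" "edge_diff v z 4 = b4" "edge_diff v z 5 = - b5"
    unfolding edge_diff_def b0_def b1_def b2_def b3_def b4_def b5_def
      N0_def N1_def N2_def N3_def N4_def N5_def by simp_all
  have dd: "a0*b0 + a3*b3 - a3*b0 \<noteq> 0" "a2*b2 + a5*b5 - a5*b2 \<noteq> 0"
     "a4*b4 + a1*b1 - a1*b4 \<noteq> 0"
    using den unfolding z_def[symmetric] Let_def fu gv by (simp_all add: algebra_simps)
  note C = core[of a0 b0 a1 b1 a2 b2 a3 b3 a4 b4 a5 b5,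
     OF R0(1)[folded a0_def a1_def b0_def b1_def] R1(1)[folded a2_def a1_def b2_def b1_def]
        R2(1)[folded a2_def a3_def b2_def b3_def] R3(1)[folded a4_def a3_def b4_def b3_def]
        R4(1)[folded a4_def a5_def b4_def b5_def] R5(1)[folded a0_def a5_def b0_def b5_def]
        R0(3)[folded a1_def] R2(3)[folded a3_def] R4(3)[folded a5_def]
        R0(4)[folded b0_def] R1(4)[folded b2_def] R3(4)[folded b4_def] dd]
  have Su: "let f = edge_diff u z; g = edge_diff v z in
      (f 0 * g 0 * f 3) / (f 0 * g 0 + g 0 * f 3 + f 3 * g 3)
    + (f 2 * g 2 * f 5) / (f 2 * g 2 + g 2 * f 5 + f 5 * g 5)
    + (f 4 * g 4 * f 1) / (f 4 * g 4 + g 4 * f 1 + f 1 * g 1) = 0"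
    unfolding Let_def fu gv using C(1) by (simp add: algebra_simps)
  have Sv: "let f = edge_diff u z; g = edge_diff v z in
      (g 0 * f 3 * g 3) / (f 0 * g 0 + g 0 * f 3 + f 3 * g 3)
    + (g 2 * f 5 * g 5) / (f 2 * g 2 + g 2 * f 5 + f 5 * g 5)
    + (g 4 * f 1 * g 1) / (f 4 * g 4 + g 4 * f 1 + f 1 * g 1) = 0"
    unfolding Let_def fu gv using C(2) by (simp add: algebra_simps)
  have ru: "rhs_u u v (k + n) (l + n) (m + n) = rhs_u u v k l m"
    unfolding rhs_u_def shift Let_def z_def[symmetric]
    using Su unfolding Let_def by (simp only: of_int_add lin3) simp
  have rv: "rhs_v u v (k + n) (l + n) (m + n) = rhs_v u v k l m"
    unfolding rhs_v_def shift Let_def z_def[symmetric]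
    using Sv unfolding Let_def by (simp only: of_int_add lin3) simp
  show ?thesis using shift ru rv by simp
qed
end
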